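(* Consider a switched descriptor system $E_{\sigma(t)}\dot x=A_{\sigma(t)}x$, $\sigma(t)\in\{1,\dots,N\}$, with each $A_i$ nonsingular, and suppose that for each $i=1,\dots,N$ there is a Lyapunov matrix $P_i$ for $(E_i,A_i)$ such that for every solution $x(\cdot)$ and every time $t_*$ at which $\sigma$ switches from $i$ to $j$, $$x(t_*^+)^TP_jx(t_*^+)\le x(t_*^-)^TP_ix(t_*^-).$$ Then the switched system is globally uniformly exponentially stable (GUES).
   Context: For $E,A\in\mathbb{R}^{n\times n}$ with $A$ nonsingular, $(E,A)$ denotes the descriptor system $E\dot x=Ax$; its index is the smallest $k^*\ge0$ with $\mathrm{Im}((A^{-1}E)^{k^*+1})=\mathrm{Im}((A^{-1}E)^{k^*})$ and its consistency space is $\mathcal{C}(E,A)=\mathrm{Im}((A^{-1}E)^{k^*})$. When $\mathcal{C}\ne\{0\}$, $A^{-1}E$ is a bijection of $\mathcal{C}$ onto itself, and with $\tilde A$ the inverse of its restriction, the system on $\mathcal{C}$ is $\dot x=\tilde Ax$. A symmetric $P$ is a Lyapunov matrix for $(E,A)$ if $x^TPx>0$ for nonzero $x\in\mathcal{C}$ and $2x^TP\tilde Ax<0$ for nonzero $x\in\mathcal{C}$. Switched descriptor system: the switching signal $\sigma$ is piecewise constant with values in $\{1,\dots,N\}$ and finitely many discontinuities in every bounded interval. A solution is a function $x(\cdot)$ that is differentiable and satisfies $E_{\sigma(t)}\dot x(t)=A_{\sigma(t)}x(t)$ at every $t$ where $\sigma$ is continuous (so $x(t)\in\mathcal{C}(E_{\sigma(t)},A_{\sigma(t)})$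 there), and has one-sided limits $x(t_*^-)$, $x(t_*^+)$ at each discontinuity $t_*$ of $\sigma$; the differential equation is not required at discontinuities, and the relation between $x(t_*^+)$ and $x(t_*^-)$ as well as which switches are allowed are part of the system specification. The system is GUES if there exist $\beta,\alpha>0$ such that every solution satisfies $\|x(t)\|\le\beta e^{-\alpha(t-t_0)}\|x(t_0)\|$ for all $t\ge t_0$. *)

theory Defs
  imports "HOL-Analysis.Analysis"
begin

definition AinvE :: "real^'n^'n \<Rightarrow> real^'n^'n \<Rightarrow> real^'n \<Rightarrow> real^'n" where
  "AinvE E A = (\<lambda>x. (matrix_inv A ** E) *v x)"

definition dae_index :: "real^'n^'n \<Rightarrow> real^'n^'n \<Rightarrow> nat" where
  "dae_index E A = (LEAST k. range ((AinvE E A) ^^ (Suc k)) = range ((AinvE E A) ^^ k))"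

definition consistency_space :: "real^'n^'n \<Rightarrow> real^'n^'n \<Rightarrow> (real^'n) set" where
  "consistency_space E A = range ((AinvE E A) ^^ (dae_index E A))"

definition Atilde :: "real^'n^'n \<Rightarrow> real^'n^'n \<Rightarrow> real^'n \<Rightarrow> real^'n" where
  "Atilde E A x = (THE y. y \<in> consistency_space E A \<and> AinvE E A y = x)"

definition lyapunov_matrix :: "real^'n^'n \<Rightarrow> real^'n^'n \<Rightarrow> real^'n^'n \<Rightarrow> bool" where
  "lyapunov_matrix E A P \<longleftrightarrow>
     transpose P = P \<and>
     (\<forall>x \<in> consistency_space E A. x \<noteq> 0 \<longrightarrow> x \<bullet> (P *v x) > 0) \<and>
     (\<forall>x \<in> consistency_space E A. x \<noteq> 0 \<longrightarrow> 2 * (x \<bullet> (P *v Atilde E A x)) < 0)"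

definition switch_times :: "real \<Rightarrow> (real \<Rightarrow> nat) \<Rightarrow> real set" where
  "switch_times t0 \<sigma> = {t. t0 \<le> t \<and> \<not> continuous (at t within {t0..}) \<sigma>}"

text \<open>A solution on [t0,oo) of the switched descriptor system with modes 1..N.
  Convention: x(t) = x(t+) at switching times (right-continuity of x).\<close>
definition switched_solution ::
  "nat \<Rightarrow> (nat \<Rightarrow> real^'n^'n) \<Rightarrow> (nat \<Rightarrow> real^'n^'n) \<Rightarrow> real \<Rightarrow> (real \<Rightarrow> nat) \<Rightarrow> (real \<Rightarrow> real^'n) \<Rightarrow> bool"
  where
  "switched_solution N E A t0 \<sigma> x \<longleftrightarrow>
     (\<forall>t \<ge> t0. \<sigma> t \<in> {1..N}) \<and>
     (\<forall>b. finite (switch_times t0 \<sigma> \<inter> {..b})) \<and>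
     (\<forall>t \<ge> t0. t \<notin> switch_times t0 \<sigma> \<longrightarrow>
        (\<exists>v. (x has_vector_derivative v) (at t within {t0..}) \<and>
             E (\<sigma> t) *v v = A (\<sigma> t) *v x t)) \<and>
     (\<forall>t \<in> switch_times t0 \<sigma>. t0 < t \<longrightarrow> (\<exists>l. (x \<longlongrightarrow> l) (at_left t))) \<and>
     (\<forall>t \<ge> t0. (x \<longlongrightarrow> x t) (at_right t))"

definition GUES :: "(real \<times> (real \<Rightarrow> nat) \<times> (real \<Rightarrow> real^'n)) set \<Rightarrow> bool" where
  "GUES Sys \<longleftrightarrow> (\<exists>\<beta> > 0. \<exists>\<alpha> > 0. \<forall>(t0, \<sigma>, x) \<in> Sys. \<forall>t \<ge> t0.
      norm (x t) \<le> \<beta> * exp (- \<alpha> * (t - t0)) * norm (x t0))"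

end

theory Submission
  imports Defs
begin


lemma quot_aux:
  fixes a b v :: "'a::real_vector"
  assumes c: "y \<noteq> (t::real)"
  shows "(a - b) /\<^sub>R (y - t) - v = (1 / (y - t)) *\<^sub>R (a - (b + (y - t) *\<^sub>R v))"
proof -
  have c': "y - t \<noteq> 0" using c by simp
  have "(1 / (y - t)) *\<^sub>R (a - (b + (y - t) *\<^sub>R v)) = (1 / (y - t)) *\<^sub>R (a - b) - (1 / (y - t)) *\<^sub>R ((y - t) *\<^sub>R v)"
    by (simp add: algebra_simps)
  also have "(1 / (y - t)) *\<^sub>R ((y - t) *\<^sub>R v) = v" using c' by simp
  also have "(1 / (y - t)) *\<^sub>R (a - b) = (a - b) /\<^sub>R (y - t)" by (simp add: inverse_eq_divide)
  finally show ?thesis by simp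
qed

lemma vd_quot:
  fixes f :: "real \<Rightarrow> 'a::real_normed_vector"
  assumes "(f has_vector_derivative v) (at t within X)"
  shows "((\<lambda>y. (f y - f t) /\<^sub>R (y - t)) \<longlongrightarrow> v) (at t within X)"
proof -
  have "((\<lambda>y. (1 / norm (y - t)) *\<^sub>R (f y - (f t + (y - t) *\<^sub>R v))) \<longlongrightarrow> 0) (at t within X)"
    using assms unfolding has_vector_derivative_def has_derivative_within by simp
  then have "((\<lambda>y. norm ((1 / norm (y - t)) *\<^sub>R (f y - (f t + (y - t) *\<^sub>R v)))) \<longlongrightarrow> 0) (at t within X)"
    by (rule tendsto_norm_zero)
  moreover have "\<forall>\<^sub>F y in at t within X. norm ((1 / norm (y - t)) *\<^sub>R (f y - (f t + (y - t) *\<^sub>R v)))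
      = norm ((f y - f t) /\<^sub>R (y - t) - v)"
  proof -
    have "\<forall>\<^sub>F y in at t within X. y \<noteq> t" by (simp add: eventually_at_filter)
    then show ?thesis
    proof (rule eventually_mono)
      fix y :: real assume y: "y \<noteq> t"
      have "(f y - f t) /\<^sub>R (y - t) - v = (1 / (y - t)) *\<^sub>R (f y - (f t + (y - t) *\<^sub>R v))"
        using y by (rule quot_aux)
      then have "(f y - f t) /\<^sub>R (y - t) - v = (1 / (y - t)) *\<^sub>R (f y - (f t + (y - t) *\<^sub>R v))" by simp
      then show "norm ((1 / norm (y - t)) *\<^sub>R (f y - (f t + (y - t) *\<^sub>R v))) = norm ((f y - f t) /\<^sub>R (y - t) - v)"
        by simp
    qed
  qed
  ultimately have "((\<lambda>y. norm ((f y - f t) /\<^sub>R (y - t) - v)) \<longlongrightarrow> 0) (at t within X)"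
    by (rule Lim_transform_eventually)
  then have "((\<lambda>y. (f y - f t) /\<^sub>R (y - t) - v) \<longlongrightarrow> 0) (at t within X)"
    by (rule tendsto_norm_zero_cancel)
  then show ?thesis by (simp add: Lim_null[symmetric])
qed

lemma deriv_in_subspace:
  fixes f :: "real \<Rightarrow> 'a::euclidean_space"
  assumes W: "subspace W" and d: "(f has_vector_derivative v) (at t within X)"
    and nb: "at t within X \<noteq> bot" and ev: "\<forall>\<^sub>F y in at t within X. f y \<in> W" and ft: "f t \<in> W"
  shows "v \<in> W"
proof (rule Lim_in_closed_set[OF closed_subspace[OF W] _ nb vd_quot[OF d]])
  show "\<forall>\<^sub>F y in at t within X. (f y - f t) /\<^sub>R (y - t) \<in> W"
    using ev by (rule eventually_mono) (use W ft in \<open>simp add: subspace_diff subspace_scale\<close>)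
qed

lemma at_Ici_nontriv: "t0 \<le> (t::real) \<Longrightarrow> at t within {t0..} \<noteq> bot"
proof
  assume t: "t0 \<le> t" and b: "at t within {t0..} = bot"
  have "at_right t \<le> at t within {t0..}" by (rule at_le) (use t in auto)
  then have "at_right t = bot" using b by (simp add: bot_unique)
  then show False by simp
qed




lemma linear_AinvE: "linear (AinvE E A)"
  unfolding AinvE_def by simp

lemma linear_funpow: fixes f :: "'a::real_normed_vector \<Rightarrow> 'a" shows "linear f \<Longrightarrow> linear (f ^^ k)"
  proof (induction k)
  case 0
  have "f ^^ 0 = (\<lambda>x. x)" by (rule ext) simp
  show ?case unfolding \<open>f ^^ 0 = (\<lambda>x. x)\<close> by (rule bounded_linear.linear[OF bounded_linear_ident])
next
  case (Suc k)
  then have "linear (f ^^ k)" "linear f" by auto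
  then have "linear (f \<circ> f ^^ k)" by (rule linear_compose)
  then show ?case by (simp add: comp_def)
qed

lemma range_funpow_Suc: fixes f :: "'a \<Rightarrow> 'a" shows "range (f ^^ Suc k) = f ` range (f ^^ k)"
  by (simp add: image_comp)

lemma range_funpow_mono: fixes f :: "'a \<Rightarrow> 'a" shows "range (f ^^ Suc k) \<subseteq> range (f ^^ k)"
proof
  fix y assume "y \<in> range (f ^^ Suc k)"
  then obtain z where "y = (f ^^ Suc k) z" by blast
  also have "\<dots> = (f ^^ k) (f z)" by (simp add: funpow_swap1)
  finally show "y \<in> range (f ^^ k)" by blast
qed

lemma stab_exists:
  fixes f :: "'a::euclidean_space \<Rightarrow> 'a"
  assumes lf: "linear f"
  shows "\<exists>k. range (f ^^ Suc k) = range (f ^^ k)"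
proof (rule ccontr)
  assume "\<not> ?thesis"
  then have ne: "\<And>k. range (f ^^ Suc k) \<noteq> range (f ^^ k)" by blast
  have sub: "\<And>k. subspace (range (f ^^ k))"
    using linear_funpow[OF lf] by (simp add: subspace_UNIV linear_subspace_image)
  have speq: "span (range (f ^^ j)) = range (f ^^ j)" for j
    using sub[of j] span_eq_iff by blast
  have lt: "dim (range (f ^^ Suc k)) < dim (range (f ^^ k))" for k
  proof -
    have "range (f ^^ Suc k) \<subset> range (f ^^ k)" using range_funpow_mono[where f=f and k=k] ne[of k] by blast
    then have "span (range (f ^^ Suc k)) \<subset> span (range (f ^^ k))"
      unfolding speq .
    then show ?thesis by (rule dim_psubset)
  qed
  have D: "dim (range (f ^^ k)) + k \<le> dim (range (f ^^ 0))" for k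
  proof (induction k)
    case 0 show ?case by simp
  next
    case (Suc k) then show ?case using lt[of k] by linarith
  qed
  have D2: "dim (range (f ^^ 0)) \<le> DIM('a)"
    by (rule dim_subset_UNIV)
  have "dim (range (f ^^ Suc DIM('a))) + Suc DIM('a) \<le> dim (range (f ^^ 0))" by (rule D)
  then show False using D2 by linarith
qed

lemma index_stab: "range (AinvE E A ^^ Suc (dae_index E A)) = range (AinvE E A ^^ dae_index E A)"
  unfolding dae_index_def by (rule LeastI_ex[OF stab_exists[OF linear_AinvE]])

lemma image_C: "AinvE E A ` consistency_space E A = consistency_space E A"
  unfolding consistency_space_def using index_stab[of E A] range_funpow_Suc[where f="AinvE E A" and k="dae_index E A"] by simp

lemma subspace_C: "subspace (consistency_space E A)"
  unfolding consistency_space_def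
  by (rule linear_subspace_image[OF linear_funpow[OF linear_AinvE] subspace_UNIV])

lemma closed_C: "closed (consistency_space E A)"
  by (rule closed_subspace[OF subspace_C])

lemma inj_surj_subspace:
  fixes f :: "'a::euclidean_space \<Rightarrow> 'a"
  assumes lf: "linear f" and sC: "subspace C" and im: "f ` C = C"
  shows "inj_on f C"
proof -
  obtain B where B: "B \<subseteq> C" "independent B" "C \<subseteq> span B" "card B = dim C"
    by (rule basis_exists)
  have fB: "finite B" using B(2) by (simp add: independent_imp_finite)
  have "C \<subseteq> span (f ` B)"
  proof -
    have "span (f ` B) = f ` span B" by (rule linear_span_image[OF lf])
    moreover have "span B \<subseteq> C" using B(1) sC by (simp add: span_minimal)
    then have "span B = C" using B(3) by blast
    ultimately show ?thesis using im by simp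
  qed
  have fBC: "f ` B \<subseteq> C" using B(1) im by blast
  have c1: "card (f ` B) \<le> card B" using fB by (rule card_image_le)
  have c2: "dim C \<le> card (f ` B)" using dim_le_card[OF \<open>C \<subseteq> span (f ` B)\<close>] fB by simp
  have ind: "independent (f ` B)"
    using card_le_dim_spanning[OF fBC \<open>C \<subseteq> span (f ` B)\<close>] fB c1 B(4) by simp
  have injB: "inj_on f B" using c1 c2 B(4) fB by (simp add: inj_on_iff_eq_card)
  have "inj_on f (span B)"
    using ind injB lf using linear_inj_on_span_iff_independent_image by blast
  then show ?thesis using B(3) inj_on_subset by blast
qed

lemma inj_C: "inj_on (AinvE E A) (consistency_space E A)"
  by (rule inj_surj_subspace[OF linear_AinvE subspace_C image_C])

lemma Atilde_eq: "v \<in> consistency_space E A \<Longrightarrow> Atilde E A (AinvE E A v) = v"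
  unfolding Atilde_def
  by (rule the_equality) (auto dest: inj_onD[OF inj_C])




lemma mono_switch:
  fixes F :: "real \<Rightarrow> real" and S :: "real set"
  assumes fin: "\<And>b. finite (S \<inter> {..b})"
    and piece: "\<And>a u. t0 \<le> a \<Longrightarrow> a \<le> u \<Longrightarrow> (\<forall>s\<in>S. \<not> (a < s \<and> s \<le> u)) \<Longrightarrow> F u \<le> F a"
    and jmp: "\<And>s. s \<in> S \<Longrightarrow> t0 < s \<Longrightarrow> \<exists>L. (F \<longlongrightarrow> L) (at_left s) \<and> F s \<le> L"
  shows "t \<ge> t0 \<Longrightarrow> F t \<le> F t0"
proof (induction "card (S \<inter> {t0<..t})" arbitrary: t rule: less_induct)
  case less
  define T where "T = S \<inter> {t0<..t}"
  have fT: "finite T" unfolding T_def using fin[of t] by (rule finite_subset[rotated]) auto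
  show ?case
  proof (cases "T = {}")
    case True
    then have "\<forall>s\<in>S. \<not> (t0 < s \<and> s \<le> t)" unfolding T_def by auto
    then show ?thesis using piece[of t0 t] less.prems by simp
  next
    case False
    define s where "s = Max T"
    have sT: "s \<in> T" unfolding s_def using fT False by simp
    have smax: "\<And>y. y \<in> T \<Longrightarrow> y \<le> s" unfolding s_def using fT by simp
    have sS: "s \<in> S" "t0 < s" "s \<le> t" using sT unfolding T_def by auto
    have noS: "\<forall>y\<in>S. \<not> (s < y \<and> y \<le> t)"
    proof (intro ballI notI)
      fix y assume y: "y \<in> S" "s < y \<and> y \<le> t"
      then have "y \<in> T" using sS unfolding T_def by auto
      then have "y \<le> s" by (rule smax)
      then show False using y by simp
    qed
    have Fts: "F t \<le> F s"
      by (rule piece[OF _ _ noS]) (use sS in auto)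
    obtain L where L: "(F \<longlongrightarrow> L) (at_left s)" "F s \<le> L" using jmp sS by blast
    define s' where "s' = Max (insert t0 (T - {s}))"
    have fin': "finite (insert t0 (T - {s}))" using fT by simp
    have s't: "s' < s"
    proof -
      have "\<forall>a\<in>insert t0 (T - {s}). a < s"
      proof
        fix a assume "a \<in> insert t0 (T - {s})"
        then show "a < s"
        proof
          assume "a = t0" then show ?thesis using sS by simp
        next
          assume "a \<in> T - {s}" then show ?thesis using smax[of a] by force
        qed
      qed
      then show ?thesis unfolding s'_def using fin' by (subst Max_less_iff) auto
    qed
    have s'ge: "y \<le> s'" if "y \<in> T - {s}" for y unfolding s'_def using fin' that by simp
    have t0s': "t0 \<le> s'" unfolding s'_def using fin' by simp
    have ev: "\<forall>\<^sub>F u in at_left s. F u \<le> F t0"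
    proof -
      have "\<forall>\<^sub>F u in at_left s. s' < u" unfolding eventually_at_left_field using s't by (intro exI[of _ s']) auto
      moreover have "\<forall>\<^sub>F u in at_left s. u < s" by (simp add: eventually_at_filter)
      ultimately show ?thesis
      proof eventually_elim
        case (elim u)
        have sub: "S \<inter> {t0<..u} \<subseteq> T - {s}"
          using elim sS unfolding T_def by auto
        have "S \<inter> {t0<..u} \<subset> T"
          using sub sT by blast
        then have "card (S \<inter> {t0<..u}) < card (S \<inter> {t0<..t})"
          using fT unfolding T_def by (simp add: psubset_card_mono)
        moreover have "t0 \<le> u" using elim t0s' by simp
        ultimately show ?case using less.hyps by blast
      qed
    qed
    have "L \<le> F t0"
      by (rule tendsto_upperbound[OF L(1) ev]) simp
    then show ?thesis using Fts L(2) by simp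
  qed
qed




lemma quad_lower:
  fixes q :: "'a::euclidean_space \<Rightarrow> real"
  assumes cont: "continuous_on UNIV q"
    and hom: "\<And>t x. q (t *\<^sub>R x) = t^2 * q x"
    and sC: "subspace C"
    and pos: "\<And>x. x \<in> C \<Longrightarrow> x \<noteq> 0 \<Longrightarrow> q x > 0"
  shows "\<exists>c>0. \<forall>x\<in>C. c * (norm x)^2 \<le> q x"
proof -
  have q0: "q 0 = 0" using hom[of 0 0] by simp
  define K where "K = C \<inter> sphere 0 1"
  have cK: "compact K" unfolding K_def
    by (simp add: closed_subspace[OF sC] compact_Int_closed compact_sphere Int_commute closed_Int_compact)
  show ?thesis
  proof (cases "K = {}")
    case True
    have "\<forall>x\<in>C. 1 * (norm x)^2 \<le> q x"
    proof
      fix x assume x: "x \<in> C"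
      show "1 * (norm x)^2 \<le> q x"
      proof (cases "x = 0")
        case True then show ?thesis using q0 by simp
      next
        case False
        then have "(1 / norm x) *\<^sub>R x \<in> K" unfolding K_def
          using x sC by (simp add: subspace_scale)
        then show ?thesis using True by blast
      qed
    qed
    then show ?thesis by (intro exI[of _ 1]) simp
  next
    case False
    obtain m where m: "m \<in> K" "\<And>y. y \<in> K \<Longrightarrow> q m \<le> q y"
      using continuous_attains_inf[OF cK False continuous_on_subset[OF cont]] by blast
    have mC: "m \<in> C" and m1: "norm m = 1" using m(1) unfolding K_def by auto
    then have "m \<noteq> 0" by auto
    then have cpos: "q m > 0" using mC pos by blast
    have "\<forall>x\<in>C. q m * (norm x)^2 \<le> q x"
    proof
      fix x assume x: "x \<in> C"
      show "q m * (norm x)^2 \<le> q x"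
      proof (cases "x = 0")
        case True then show ?thesis using q0 by simp
      next
        case False
        have yK: "(1 / norm x) *\<^sub>R x \<in> K" unfolding K_def
          using x sC False by (simp add: subspace_scale)
        have "q x = (norm x)^2 * q ((1 / norm x) *\<^sub>R x)"
          using hom[of "norm x" "(1 / norm x) *\<^sub>R x"] False by simp
        moreover have "q m * (norm x)^2 \<le> q ((1 / norm x) *\<^sub>R x) * (norm x)^2"
          using m(2)[OF yK] by (rule mult_right_mono) simp
        ultimately show ?thesis by (simp add: mult.commute)
      qed
    qed
    then show ?thesis using cpos by blast
  qed
qed




lemma quad_upper:
  fixes P :: "real^'n^'n"
  shows "\<exists>K>0. \<forall>y. y \<bullet> (P *v y) \<le> K * (norm y)^2"
proof -
  obtain B where B: "B > 0" "\<And>y. norm (P *v y) \<le> B * norm y"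
    using linear_bounded_pos[OF matrix_vector_mul_linear[of P]] by blast
  have "y \<bullet> (P *v y) \<le> B * (norm y)^2" for y
  proof -
    have "y \<bullet> (P *v y) \<le> norm y * norm (P *v y)" by (rule norm_cauchy_schwarz)
    also have "\<dots> \<le> norm y * (B * norm y)" using B(2)[of y] by (simp add: mult_left_mono)
    finally show ?thesis by (simp add: power2_eq_square algebra_simps)
  qed
  then show ?thesis using B(1) by blast
qed

lemma AinvE_scale: "AinvE E A (t *\<^sub>R v) = t *\<^sub>R AinvE E A v"
  unfolding AinvE_def by (simp add: matrix_vector_mult_scaleR)

lemma cont_AinvE: "continuous_on UNIV (AinvE E A)"
  unfolding AinvE_def by (intro linear_continuous_on linear_conv_bounded_linear[THEN iffD1]) simp

lemma mode_consts:
  fixes E A P :: "real^'n^'n"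
  assumes lyap: "lyapunov_matrix E A P"
  shows "\<exists>c>0. \<exists>l>0.
     (\<forall>y\<in>consistency_space E A. c * (norm y)^2 \<le> y \<bullet> (P *v y)) \<and>
     (\<forall>v\<in>consistency_space E A. 2 * (AinvE E A v \<bullet> (P *v v)) \<le> - l * (AinvE E A v \<bullet> (P *v AinvE E A v)))"
proof -
  let ?C = "consistency_space E A" and ?M = "AinvE E A"
  have pos: "\<And>x. x \<in> ?C \<Longrightarrow> x \<noteq> 0 \<Longrightarrow> x \<bullet> (P *v x) > 0"
    using lyap unfolding lyapunov_matrix_def by blast
  have neg: "\<And>x. x \<in> ?C \<Longrightarrow> x \<noteq> 0 \<Longrightarrow> 2 * (x \<bullet> (P *v Atilde E A x)) < 0"
    using lyap unfolding lyapunov_matrix_def by blast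
  have contP: "continuous_on UNIV (\<lambda>y. P *v y)"
    by (intro linear_continuous_on linear_conv_bounded_linear[THEN iffD1]) simp
  have c1: "continuous_on UNIV (\<lambda>y. y \<bullet> (P *v y))"
    by (intro continuous_intros contP)
  have h1: "(t *\<^sub>R y) \<bullet> (P *v (t *\<^sub>R y)) = t^2 * (y \<bullet> (P *v y))" for t :: real and y :: "real^'n"
    by (simp add: matrix_vector_mult_scaleR power2_eq_square)
  obtain c where c: "c > 0" "\<forall>y\<in>?C. c * (norm y)^2 \<le> y \<bullet> (P *v y)"
    using quad_lower[of "\<lambda>y. y \<bullet> (P *v y)" ?C, OF c1 h1 subspace_C pos] by blast
  have M0: "?M 0 = 0" unfolding AinvE_def by simp
  have neg2: "- 2 * (?M v \<bullet> (P *v v)) > 0" if v: "v \<in> ?C" "v \<noteq> 0" for v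
  proof -
    have "?M v \<in> ?C" using image_C v(1) by blast
    moreover have "?M v \<noteq> 0" using inj_onD[OF inj_C[of E A], of v 0] v M0 subspace_C
      by (metis subspace_0)
    ultimately have "2 * (?M v \<bullet> (P *v Atilde E A (?M v))) < 0" using neg by blast
    then show ?thesis using Atilde_eq[OF v(1)] by simp
  qed
  have c2: "continuous_on UNIV (\<lambda>v. - 2 * (?M v \<bullet> (P *v v)))"
    by (intro continuous_intros contP cont_AinvE)
  have h2: "- 2 * (?M (t *\<^sub>R v) \<bullet> (P *v (t *\<^sub>R v))) = t^2 * (- 2 * (?M v \<bullet> (P *v v)))" for t :: real and v :: "real^'n"
    by (simp add: matrix_vector_mult_scaleR AinvE_scale power2_eq_square)
  obtain d where d: "d > 0" "\<forall>v\<in>?C. d * (norm v)^2 \<le> - 2 * (?M v \<bullet> (P *v v))"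
    using quad_lower[of "\<lambda>v. - 2 * (?M v \<bullet> (P *v v))" ?C, OF c2 h2 subspace_C neg2] by blast
  obtain K where K: "K > 0" "\<And>y. y \<bullet> (P *v y) \<le> K * (norm y)^2" using quad_upper by blast
  obtain B where B: "B > 0" "\<And>y. norm (?M y) \<le> B * norm y"
    using linear_bounded_pos[OF linear_AinvE] by blast
  define l where "l = d / (K * B^2)"
  have lpos: "l > 0" unfolding l_def using d K B by simp
  have "2 * (?M v \<bullet> (P *v v)) \<le> - l * (?M v \<bullet> (P *v ?M v))" if v: "v \<in> ?C" for v
  proof -
    have "?M v \<bullet> (P *v ?M v) \<le> K * (norm (?M v))^2" by (rule K(2))
    also have "\<dots> \<le> K * (B * norm v)^2"
      using B(2)[of v] K(1) by (intro mult_left_mono power_mono) auto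
    finally have "l * (?M v \<bullet> (P *v ?M v)) \<le> l * (K * (B * norm v)^2)"
      using lpos by (simp add: mult_left_mono)
    also have "\<dots> = d * (norm v)^2" unfolding l_def using K B by (simp add: power_mult_distrib)
    finally have i1: "l * (?M v \<bullet> (P *v ?M v)) \<le> d * (norm v)^2" .
    have i2: "d * (norm v)^2 \<le> - 2 * (?M v \<bullet> (P *v v))" using d(2) v by blast
    show ?thesis using i1 i2 by linarith
  qed
  then have key: "\<forall>v\<in>?C. 2 * (?M v \<bullet> (P *v v)) \<le> - l * (?M v \<bullet> (P *v ?M v))" by blast
  show ?thesis
    by (rule exI[of _ c], rule conjI, fact c(1), rule exI[of _ l], rule conjI, fact lpos, rule conjI, fact c(2), fact key)
qed




lemma matrix_inv_left': "invertible A \<Longrightarrow> matrix_inv A ** A = mat 1"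
  unfolding matrix_inv_def invertible_def by (rule someI2_ex) auto

lemma AinvE_sol:
  assumes "invertible A" "E *v v = A *v y"
  shows "AinvE E A v = y"
proof -
  have "AinvE E A v = matrix_inv A *v (E *v v)"
    unfolding AinvE_def by (simp add: matrix_vector_mul_assoc)
  also have "\<dots> = (matrix_inv A ** A) *v y" using assms(2) by (simp add: matrix_vector_mul_assoc)
  finally show ?thesis using matrix_inv_left'[OF assms(1)] by simp
qed

context
  fixes N :: nat and E A :: "nat \<Rightarrow> real^'n^'n" and t0 :: real
    and \<sigma> :: "real \<Rightarrow> nat" and x :: "real \<Rightarrow> real^'n"
  assumes sol: "switched_solution N E A t0 \<sigma> x"
    and nonsing: "\<forall>i \<in> {1..N}. invertible (A i)"
begin

abbreviation "SW \<equiv> switch_times t0 \<sigma>"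

lemma s_range: "t \<ge> t0 \<Longrightarrow> \<sigma> t \<in> {1..N}"
  using sol unfolding switched_solution_def by blast
lemma s_fin: "finite (SW \<inter> {..b})"
  using sol unfolding switched_solution_def by blast
lemma s_der: "t \<ge> t0 \<Longrightarrow> t \<notin> SW \<Longrightarrow>
   \<exists>v. (x has_vector_derivative v) (at t within {t0..}) \<and> E (\<sigma> t) *v v = A (\<sigma> t) *v x t"
  using sol unfolding switched_solution_def by blast
lemma s_left: "t \<in> SW \<Longrightarrow> t0 < t \<Longrightarrow> \<exists>l. (x \<longlongrightarrow> l) (at_left t)"
  using sol unfolding switched_solution_def by blast
lemma s_right: "t \<ge> t0 \<Longrightarrow> (x \<longlongrightarrow> x t) (at_right t)"
  using sol unfolding switched_solution_def by blast

lemma SW_ge: "s \<in> SW \<Longrightarrow> t0 \<le> s"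
  unfolding switch_times_def by simp

lemma isolated: "\<exists>d>0. \<forall>s\<in>SW. s \<noteq> u \<longrightarrow> d \<le> \<bar>s - u\<bar>"
proof -
  obtain d0 where d0: "d0 > 0" "\<forall>s\<in>SW \<inter> {..u+1}. s \<noteq> u \<longrightarrow> d0 \<le> dist u s"
    using finite_set_avoid[OF s_fin[of "u+1"], of u] by blast
  have "\<forall>s\<in>SW. s \<noteq> u \<longrightarrow> min d0 1 \<le> \<bar>s - u\<bar>"
  proof (intro ballI impI)
    fix s assume s: "s \<in> SW" "s \<noteq> u"
    show "min d0 1 \<le> \<bar>s - u\<bar>"
    proof (cases "s \<le> u + 1")
      case True
      then have "d0 \<le> dist u s" using d0(2) s by auto
      then show ?thesis by (simp add: dist_real_def abs_minus_commute)
    next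
      case False then show ?thesis by simp
    qed
  qed
  then show ?thesis using d0(1) by (intro exI[of _ "min d0 1"]) simp
qed

lemma nonsw_ev: "t \<ge> t0 \<Longrightarrow> t \<notin> SW \<Longrightarrow> \<forall>\<^sub>F s in at t within {t0..}. \<sigma> s = \<sigma> t"
  unfolding switch_times_def continuous_within by (simp add: tendsto_discrete)

lemma const_interval:
  assumes a: "t0 \<le> a" and noS: "\<forall>s\<in>SW. \<not> (a < s \<and> s < b)"
  shows "\<exists>i. \<forall>s\<in>{a<..<b}. \<sigma> s = i"
proof (cases "a < b")
  case False then show ?thesis by auto
next
  case True
  define m where "m = (a + b) / 2"
  have mI: "m \<in> {a<..<b}" unfolding m_def using True by simp
  let ?I = "{a<..<b}"
  have cont: "continuous_on ?I (\<lambda>s. \<sigma> s = \<sigma> m)"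
    unfolding continuous_on_def
  proof
    fix s assume s: "s \<in> ?I"
    have "s \<notin> SW" "t0 \<le> s" using s noS a by auto
    then have ev: "\<forall>\<^sub>F y in at s within {t0..}. \<sigma> y = \<sigma> s" by (rule nonsw_ev[rotated])
    have "at s within ?I \<le> at s within {t0..}" by (rule at_le) (use a in auto)
    then have "\<forall>\<^sub>F y in at s within ?I. \<sigma> y = \<sigma> s" using ev by (rule filter_leD)
    then have "\<forall>\<^sub>F y in at s within ?I. (\<sigma> y = \<sigma> m) = (\<sigma> s = \<sigma> m)" by (rule eventually_mono) simp
    then show "((\<lambda>s. \<sigma> s = \<sigma> m) \<longlongrightarrow> (\<sigma> s = \<sigma> m)) (at s within ?I)" by (rule tendsto_eventually)
  qed
  obtain c where c: "\<forall>s\<in>?I. (\<sigma> s = \<sigma> m) = c"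
    using connected_iff_const[THEN iffD1, OF connected_Ioo] cont by blast
  then have "c" using mI by auto
  then show ?thesis using c by blast
qed

lemma right_nbhd: "t \<ge> t0 \<Longrightarrow> \<exists>d>0. \<exists>i. \<forall>s. t < s \<and> s < t + d \<longrightarrow> s \<notin> SW \<and> \<sigma> s = i"
proof -
  assume t: "t \<ge> t0"
  obtain d where d: "d > 0" "\<forall>s\<in>SW. s \<noteq> t \<longrightarrow> d \<le> \<bar>s - t\<bar>" using isolated by blast
  have noS: "\<forall>s\<in>SW. \<not> (t < s \<and> s < t + d)" using d by force
  obtain i where "\<forall>s\<in>{t<..<t+d}. \<sigma> s = i" using const_interval[OF t noS] by blast
  then show ?thesis using d(1) noS by (intro exI[of _ d]) auto
qed

lemma left_nbhd: "t > t0 \<Longrightarrow> \<exists>d>0. \<exists>i. \<forall>s. t - d < s \<and> s < t \<longrightarrow> s \<notin> SW \<and> t0 < s \<and> \<sigma> s = i"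
proof -
  assume t: "t > t0"
  obtain d0 where d: "d0 > 0" "\<forall>s\<in>SW. s \<noteq> t \<longrightarrow> d0 \<le> \<bar>s - t\<bar>" using isolated by blast
  define d where "d = min d0 (t - t0)"
  have dpos: "d > 0" unfolding d_def using d t by simp
  have a: "t0 \<le> t - d" unfolding d_def by simp
  have noS: "\<forall>s\<in>SW. \<not> (t - d < s \<and> s < t)" using d unfolding d_def by force
  obtain i where "\<forall>s\<in>{t-d<..<t}. \<sigma> s = i" using const_interval[OF a noS] by blast
  then show ?thesis using dpos noS a by (intro exI[of _ d]) auto
qed

definition rmode :: "real \<Rightarrow> nat" where
  "rmode t = (SOME i. \<forall>\<^sub>F s in at_right t. \<sigma> s = i)"

lemma r_ev: "t \<ge> t0 \<Longrightarrow> \<forall>\<^sub>F s in at_right t. \<sigma> s = rmode t"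
proof -
  assume t: "t \<ge> t0"
  obtain d i where d: "d > 0" "\<forall>s. t < s \<and> s < t + d \<longrightarrow> s \<notin> SW \<and> \<sigma> s = i"
    using right_nbhd[OF t] by blast
  have "\<forall>\<^sub>F s in at_right t. \<sigma> s = i"
    unfolding eventually_at_right_field using d by (intro exI[of _ "t + d"]) auto
  then show ?thesis unfolding rmode_def by (rule someI)
qed

lemma r_unique: "t \<ge> t0 \<Longrightarrow> \<forall>\<^sub>F s in at_right t. \<sigma> s = i \<Longrightarrow> rmode t = i"
proof -
  assume t: "t \<ge> t0" and ev: "\<forall>\<^sub>F s in at_right t. \<sigma> s = i"
  have "\<forall>\<^sub>F s in at_right t. rmode t = i" using eventually_conj[OF r_ev[OF t] ev]
    by (rule eventually_mono) auto
  then show ?thesis by simp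
qed

lemma r_nonsw: "t \<ge> t0 \<Longrightarrow> t \<notin> SW \<Longrightarrow> rmode t = \<sigma> t"
proof -
  assume t: "t \<ge> t0" "t \<notin> SW"
  have "at_right t \<le> at t within {t0..}" by (rule at_le) (use t in auto)
  then have "\<forall>\<^sub>F s in at_right t. \<sigma> s = \<sigma> t" using nonsw_ev[OF t] by (rule filter_leD)
  then show ?thesis by (rule r_unique[OF t(1)])
qed

lemma r_range: "t \<ge> t0 \<Longrightarrow> rmode t \<in> {1..N}"
proof -
  assume t: "t \<ge> t0"
  have "\<forall>\<^sub>F s in at_right t. s > t" by (simp add: eventually_at_filter)
  then have "\<forall>\<^sub>F s in at_right t. rmode t \<in> {1..N}" using r_ev[OF t]
    by (rule eventually_elim2) (metis s_range t order_trans less_imp_le)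
  then show ?thesis by simp
qed


lemma ev_nsw: "\<forall>\<^sub>F y in at t within S. y \<notin> SW"
proof -
  obtain d where d: "d > 0" "\<forall>s\<in>SW. s \<noteq> t \<longrightarrow> d \<le> \<bar>s - t\<bar>" using isolated by blast
  show ?thesis unfolding eventually_at
    using d by (intro exI[of _ d]) (auto simp: dist_real_def)
qed

lemma deriv_eq:
  assumes "t \<ge> t0" "E (\<sigma> t) *v v = A (\<sigma> t) *v x t"
  shows "AinvE (E (\<sigma> t)) (A (\<sigma> t)) v = x t"
  using AinvE_sol assms nonsing s_range[OF assms(1)] by blast

lemma range_ind: "t \<ge> t0 \<Longrightarrow> t \<notin> SW \<Longrightarrow> x t \<in> range (AinvE (E (\<sigma> t)) (A (\<sigma> t)) ^^ k)"
proof (induction k arbitrary: t)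
  case 0 then show ?case by simp
next
  case (Suc k)
  let ?M = "AinvE (E (\<sigma> t)) (A (\<sigma> t))"
  let ?W = "range (?M ^^ k)"
  obtain v where v: "(x has_vector_derivative v) (at t within {t0..})" "E (\<sigma> t) *v v = A (\<sigma> t) *v x t"
    using s_der Suc.prems by blast
  have W: "subspace ?W"
    by (rule linear_subspace_image[OF linear_funpow[OF linear_AinvE] subspace_UNIV])
  have ev: "\<forall>\<^sub>F y in at t within {t0..}. x y \<in> ?W"
  proof -
    have e3: "\<forall>\<^sub>F y in at t within {t0..}. y \<in> {t0..}" unfolding eventually_at_filter by simp
    have "\<forall>\<^sub>F y in at t within {t0..}. y \<notin> SW \<and> \<sigma> y = \<sigma> t \<and> y \<in> {t0..}"
      by (rule eventually_conj[OF ev_nsw eventually_conj[OF nonsw_ev[OF Suc.prems] e3]])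
    then show ?thesis
      by (rule eventually_mono) (metis Suc.IH atLeast_iff)
  qed
  have "v \<in> ?W"
    by (rule deriv_in_subspace[OF W v(1) at_Ici_nontriv[OF Suc.prems(1)] ev Suc.IH[OF Suc.prems]])
  then obtain w where "v = (?M ^^ k) w" by blast
  then have "x t = (?M ^^ Suc k) w" using deriv_eq[OF Suc.prems(1) v(2)] by simp
  then show ?case by blast
qed

lemma nonsw_C: "t \<ge> t0 \<Longrightarrow> t \<notin> SW \<Longrightarrow> x t \<in> consistency_space (E (\<sigma> t)) (A (\<sigma> t))"
  unfolding consistency_space_def by (rule range_ind)

lemma deriv_C:
  assumes t: "t \<ge> t0" "t \<notin> SW" and v: "(x has_vector_derivative v) (at t within {t0..})"
  shows "v \<in> consistency_space (E (\<sigma> t)) (A (\<sigma> t))"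
proof -
  let ?W = "consistency_space (E (\<sigma> t)) (A (\<sigma> t))"
  have ev: "\<forall>\<^sub>F y in at t within {t0..}. x y \<in> ?W"
  proof -
    have e3: "\<forall>\<^sub>F y in at t within {t0..}. y \<in> {t0..}" unfolding eventually_at_filter by simp
    have "\<forall>\<^sub>F y in at t within {t0..}. y \<notin> SW \<and> \<sigma> y = \<sigma> t \<and> y \<in> {t0..}"
      by (rule eventually_conj[OF ev_nsw eventually_conj[OF nonsw_ev[OF t] e3]])
    then show ?thesis
      by (rule eventually_mono) (metis nonsw_C atLeast_iff)
  qed
  show ?thesis
    by (rule deriv_in_subspace[OF subspace_C v at_Ici_nontriv[OF t(1)] ev nonsw_C[OF t]])
qed

lemma x_in_C: "t \<ge> t0 \<Longrightarrow> x t \<in> consistency_space (E (rmode t)) (A (rmode t))"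
proof -
  assume t: "t \<ge> t0"
  have ev: "\<forall>\<^sub>F y in at_right t. x y \<in> consistency_space (E (rmode t)) (A (rmode t))"
  proof -
    have e3: "\<forall>\<^sub>F y in at_right t. t < y" by (simp add: eventually_at_filter)
    have "\<forall>\<^sub>F y in at_right t. y \<notin> SW \<and> \<sigma> y = rmode t \<and> t < y"
      by (rule eventually_conj[OF ev_nsw eventually_conj[OF r_ev[OF t] e3]])
    then show ?thesis
    proof (rule eventually_mono)
      fix y assume y: "y \<notin> SW \<and> \<sigma> y = rmode t \<and> t < y"
      then have "t0 \<le> y" using t by simp
      then show "x y \<in> consistency_space (E (rmode t)) (A (rmode t))"
        using nonsw_C[of y] y by simp
    qed
  qed
  show ?thesis
    by (rule Lim_in_closed_set[OF closed_C ev _ s_right[OF t]]) simp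
qed


lemma sym_inner:
  fixes P :: "real^'n^'n"
  assumes "transpose P = P"
  shows "v \<bullet> (P *v y) = y \<bullet> (P *v v)"
proof -
  have "v \<bullet> (P *v y) = (v v* P) \<bullet> y" by (simp add: dot_lmul_matrix)
  also have "v v* P = P *v v" using vector_transpose_matrix[of v P] assms by simp
  finally show ?thesis by (simp add: inner_commute)
qed

lemma x_cont_at: "t > t0 \<Longrightarrow> t \<notin> SW \<Longrightarrow> continuous (at t) x"
proof -
  assume t: "t > t0" "t \<notin> SW"
  obtain v where v: "(x has_vector_derivative v) (at t within {t0..})" using s_der[of t] t by auto
  have "at t within {t0..} = at t" by (rule at_within_interior) (use t in simp)
  then show ?thesis using v by (metis has_vector_derivative_continuous)
qed

lemma piece:
  fixes P :: "nat \<Rightarrow> real^'n^'n" and l :: real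
  assumes Psym: "\<forall>i\<in>{1..N}. transpose (P i) = P i"
    and hl: "\<forall>i\<in>{1..N}. \<forall>v\<in>consistency_space (E i) (A i).
          2 * (AinvE (E i) (A i) v \<bullet> (P i *v v)) \<le> - l * (AinvE (E i) (A i) v \<bullet> (P i *v AinvE (E i) (A i) v))"
    and a: "t0 \<le> a" "a \<le> u" and noS: "\<forall>s\<in>SW. \<not> (a < s \<and> s \<le> u)"
  shows "exp (l * (u - t0)) * (x u \<bullet> (P (rmode u) *v x u)) \<le> exp (l * (a - t0)) * (x a \<bullet> (P (rmode a) *v x a))"
proof (cases "a = u")
  case True then show ?thesis by simp
next
  case False
  then have au: "a < u" using a by simp
  obtain i where i: "\<forall>s\<in>{a<..<u}. \<sigma> s = i"
    using const_interval[OF a(1), of u] noS by force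
  have uS: "u \<notin> SW" using noS au by auto
  have u0: "t0 \<le> u" using a by simp
  have ra: "rmode a = i"
  proof (rule r_unique[OF a(1)])
    show "\<forall>\<^sub>F s in at_right a. \<sigma> s = i"
      unfolding eventually_at_right_field using au i by (intro exI[of _ u]) auto
  qed
  have su: "\<sigma> u = i"
  proof -
    have "at_left u = at u within {a..u}" using at_within_Icc_at_left[OF au] by simp
    also have "\<dots> \<le> at u within {t0..}" by (rule at_le) (use a in auto)
    finally have "\<forall>\<^sub>F s in at_left u. \<sigma> s = \<sigma> u" using nonsw_ev[OF u0 uS] by (rule filter_leD)
    moreover have "\<forall>\<^sub>F s in at_left u. \<sigma> s = i"
      unfolding eventually_at_left_field using au i by (intro exI[of _ a]) auto
    ultimately have "\<forall>\<^sub>F s in at_left u. \<sigma> u = i" by eventually_elim simp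
    then show ?thesis by simp
  qed
  have ru: "rmode u = i" using r_nonsw[OF u0 uS] su by simp
  have iN: "i \<in> {1..N}" using s_range[OF u0] su by simp
  define G where "G s = exp (l * (s - t0)) * (x s \<bullet> (P i *v x s))" for s
  have xcont: "continuous_on {a..u} x"
    unfolding continuous_on_eq_continuous_within
  proof
    fix s assume s: "s \<in> {a..u}"
    show "continuous (at s within {a..u}) x"
    proof (cases "s = a")
      case True
      have "(x \<longlongrightarrow> x a) (at a within {a..u})"
        using s_right[OF a(1)] at_within_Icc_at_right[OF au] by simp
      then show ?thesis using True by (simp add: continuous_within)
    next
      case False
      then have "s > t0" "s \<notin> SW" using s a noS by auto
      then show ?thesis using x_cont_at continuous_at_imp_continuous_within by blast
    qed
  qed
  have Gcont: "continuous_on {a..u} G"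
    unfolding G_def
    by (intro continuous_intros xcont bounded_linear.continuous_on[OF matrix_vector_mul_bounded_linear])
  have Gder: "\<exists>y. (G has_real_derivative y) (at s) \<and> y \<le> 0" if s: "a < s" "s < u" for s
  proof -
    have s0: "t0 < s" "s \<notin> SW" using s a noS by auto
    have ss: "\<sigma> s = i" using i s by simp
    obtain v where v: "(x has_vector_derivative v) (at s within {t0..})" "E (\<sigma> s) *v v = A (\<sigma> s) *v x s"
      using s_der[of s] s0 by auto
    have vd: "(x has_vector_derivative v) (at s within {t0..})" and ve: "E i *v v = A i *v x s"
      using v ss by auto
    have "at s within {t0..} = at s" by (rule at_within_interior) (use s0 in simp)
    then have vd': "(x has_vector_derivative v) (at s)" using vd by simp
    have vC: "v \<in> consistency_space (E i) (A i)" using deriv_C[of s v] s0 vd ss by simp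
    have Mv: "AinvE (E i) (A i) v = x s" using deriv_eq[of s v] s0 ve ss by simp
    have hP: "((\<lambda>s. P i *v x s) has_vector_derivative P i *v v) (at s)"
      by (rule bounded_linear.has_vector_derivative[OF matrix_vector_mul_bounded_linear vd'])
    have hV: "((\<lambda>s. x s \<bullet> (P i *v x s)) has_vector_derivative (x s \<bullet> (P i *v v) + v \<bullet> (P i *v x s))) (at s)"
      by (rule bounded_bilinear.has_vector_derivative[OF bounded_bilinear_inner vd' hP])
    have hV': "((\<lambda>s. x s \<bullet> (P i *v x s)) has_real_derivative (2 * (x s \<bullet> (P i *v v)))) (at s)"
      using hV sym_inner[of "P i" v "x s"] Psym iN
      by (simp add: has_real_derivative_iff_has_vector_derivative)
    have hE: "((\<lambda>s. exp (l * (s - t0))) has_real_derivative (exp (l * (s - t0)) * l)) (at s)"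
      by (auto intro!: derivative_eq_intros)
    have hG: "(G has_real_derivative (exp (l * (s - t0)) * l * (x s \<bullet> (P i *v x s)) + exp (l * (s - t0)) * (2 * (x s \<bullet> (P i *v v))))) (at s)"
      unfolding G_def by (rule DERIV_cong[OF DERIV_mult'[OF hE hV']]) (simp add: algebra_simps)
    have key: "2 * (x s \<bullet> (P i *v v)) \<le> - l * (x s \<bullet> (P i *v x s))"
      using hl iN vC Mv by force
    have "exp (l * (s - t0)) * l * (x s \<bullet> (P i *v x s)) + exp (l * (s - t0)) * (2 * (x s \<bullet> (P i *v v)))
        = exp (l * (s - t0)) * (l * (x s \<bullet> (P i *v x s)) + 2 * (x s \<bullet> (P i *v v)))" by (simp add: algebra_simps)
    also have "\<dots> \<le> 0"
      using key by (intro mult_nonneg_nonpos) auto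
    finally show ?thesis using hG by blast
  qed
  have "G u \<le> G a"
    by (rule DERIV_nonpos_imp_decreasing_open[OF a(2) Gder Gcont]) auto
  then show ?thesis unfolding G_def using ra ru by simp
qed

lemma jump_step:
  fixes P :: "nat \<Rightarrow> real^'n^'n" and l :: real
  assumes jmp: "\<forall>ts \<in> SW. \<forall>i j xm xp.
                 t0 < ts \<and>
                 (\<forall>\<^sub>F t in at_left ts. \<sigma> t = i) \<and> (\<forall>\<^sub>F t in at_right ts. \<sigma> t = j) \<and>
                 (x \<longlongrightarrow> xm) (at_left ts) \<and> (x \<longlongrightarrow> xp) (at_right ts) \<longrightarrow>
                 xp \<bullet> (P j *v xp) \<le> xm \<bullet> (P i *v xm)"
    and s: "s \<in> SW" "t0 < s"
  shows "\<exists>L. ((\<lambda>u. exp (l * (u - t0)) * (x u \<bullet> (P (rmode u) *v x u))) \<longlongrightarrow> L) (at_left s) \<and>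
             exp (l * (s - t0)) * (x s \<bullet> (P (rmode s) *v x s)) \<le> L"
proof -
  obtain d i where d: "d > 0" "\<forall>y. s - d < y \<and> y < s \<longrightarrow> y \<notin> SW \<and> t0 < y \<and> \<sigma> y = i"
    using left_nbhd[OF s(2)] by blast
  obtain xm where xm: "(x \<longlongrightarrow> xm) (at_left s)" using s_left s by blast
  have evi: "\<forall>\<^sub>F y in at_left s. \<sigma> y = i"
    unfolding eventually_at_left_field using d by (intro exI[of _ "s - d"]) auto
  have s0: "t0 \<le> s" using s by simp
  have "x s \<bullet> (P (rmode s) *v x s) \<le> xm \<bullet> (P i *v xm)"
    using jmp s evi r_ev[OF s0] xm s_right[OF s0] by blast
  then have le: "exp (l * (s - t0)) * (x s \<bullet> (P (rmode s) *v x s)) \<le> exp (l * (s - t0)) * (xm \<bullet> (P i *v xm))"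
    by (simp add: mult_left_mono)
  have ev: "\<forall>\<^sub>F u in at_left s. exp (l * (u - t0)) * (x u \<bullet> (P i *v x u)) = exp (l * (u - t0)) * (x u \<bullet> (P (rmode u) *v x u))"
    unfolding eventually_at_left_field
  proof (intro exI[of _ "s - d"] conjI allI impI)
    show "s - d < s" using d by simp
  next
    fix y assume y: "s - d < y" "y < s"
    then have "y \<notin> SW" "t0 < y" "\<sigma> y = i" using d by auto
    then have "rmode y = i" using r_nonsw[of y] by simp
    then show "exp (l * (y - t0)) * (x y \<bullet> (P i *v x y)) = exp (l * (y - t0)) * (x y \<bullet> (P (rmode y) *v x y))" by simp
  qed
  have lim: "((\<lambda>u. exp (l * (u - t0)) * (x u \<bullet> (P i *v x u))) \<longlongrightarrow> exp (l * (s - t0)) * (xm \<bullet> (P i *v xm))) (at_left s)"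
    by (intro tendsto_intros xm bounded_linear.tendsto[OF matrix_vector_mul_bounded_linear])
  show ?thesis using Lim_transform_eventually[OF lim ev] le by blast
qed

lemma decay:
  fixes P :: "nat \<Rightarrow> real^'n^'n" and l c K :: real
  assumes Psym: "\<forall>i\<in>{1..N}. transpose (P i) = P i"
    and hl: "\<forall>i\<in>{1..N}. \<forall>v\<in>consistency_space (E i) (A i).
          2 * (AinvE (E i) (A i) v \<bullet> (P i *v v)) \<le> - l * (AinvE (E i) (A i) v \<bullet> (P i *v AinvE (E i) (A i) v))"
    and hc: "\<forall>i\<in>{1..N}. \<forall>y\<in>consistency_space (E i) (A i). c * (norm y)^2 \<le> y \<bullet> (P i *v y)"
    and hK: "\<forall>i\<in>{1..N}. \<forall>y. y \<bullet> (P i *v y) \<le> K * (norm y)^2"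
    and jmp: "\<forall>ts \<in> SW. \<forall>i j xm xp.
                 t0 < ts \<and>
                 (\<forall>\<^sub>F t in at_left ts. \<sigma> t = i) \<and> (\<forall>\<^sub>F t in at_right ts. \<sigma> t = j) \<and>
                 (x \<longlongrightarrow> xm) (at_left ts) \<and> (x \<longlongrightarrow> xp) (at_right ts) \<longrightarrow>
                 xp \<bullet> (P j *v xp) \<le> xm \<bullet> (P i *v xm)"
    and t: "t \<ge> t0"
  shows "c * (norm (x t))^2 \<le> exp (- l * (t - t0)) * (K * (norm (x t0))^2)"
proof -
  define F where "F u = exp (l * (u - t0)) * (x u \<bullet> (P (rmode u) *v x u))" for u
  have mono: "F t \<le> F t0"
  proof (rule mono_switch[of SW t0 F])
    show "\<And>b. finite (SW \<inter> {..b})" by (rule s_fin)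
    show "\<And>a u. t0 \<le> a \<Longrightarrow> a \<le> u \<Longrightarrow> \<forall>s\<in>SW. \<not> (a < s \<and> s \<le> u) \<Longrightarrow> F u \<le> F a"
      unfolding F_def by (rule piece[OF Psym hl])
    show "\<And>s. s \<in> SW \<Longrightarrow> t0 < s \<Longrightarrow> \<exists>L. (F \<longlongrightarrow> L) (at_left s) \<and> F s \<le> L"
      unfolding F_def by (rule jump_step[OF jmp])
  qed (rule t)
  have r1: "rmode t \<in> {1..N}" "rmode t0 \<in> {1..N}" using r_range t by auto
  have "c * (norm (x t))^2 \<le> x t \<bullet> (P (rmode t) *v x t)"
    using hc r1 x_in_C[OF t] by blast
  also have "\<dots> = exp (- l * (t - t0)) * F t"
  proof -
    have e1: "exp (- l * (t - t0)) * exp (l * (t - t0)) = 1" by (simp flip: exp_add)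
    show ?thesis unfolding F_def mult.assoc[symmetric] e1 by simp
  qed
  also have "\<dots> \<le> exp (- l * (t - t0)) * F t0" using mono by simp
  also have "F t0 = x t0 \<bullet> (P (rmode t0) *v x t0)" unfolding F_def by simp
  also have "\<dots> \<le> K * (norm (x t0))^2" using hK r1 by blast
  finally show ?thesis by (simp add: mult_left_mono)
qed

end



lemma sqrt_bound:
  fixes a n c K l d :: real
  assumes c: "c > 0" and K: "K > 0" and h: "c * a^2 \<le> exp (- l * d) * (K * n^2)" and a: "a \<ge> 0" and n: "n \<ge> 0"
  shows "a \<le> sqrt (K / c) * exp (- (l / 2) * d) * n"
proof (rule power2_le_imp_le)
  have ee: "- (l / 2) * d + - (l / 2) * d = - l * d" by (simp add: field_simps)
  have e: "(exp (- (l / 2) * d))^2 = exp (- l * d)"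
    unfolding power2_eq_square exp_add[symmetric] ee ..
  have s2: "(sqrt (K / c))^2 = K / c" using c K by simp
  have "(sqrt (K / c) * exp (- (l / 2) * d) * n)^2 = (sqrt (K / c))^2 * (exp (- (l / 2) * d))^2 * n^2"
    by (simp only: power_mult_distrib)
  also have "\<dots> = (K / c) * exp (- l * d) * n^2" unfolding s2 e ..
  finally have "(sqrt (K / c) * exp (- (l / 2) * d) * n)^2 = (K / c) * exp (- l * d) * n^2" .
  moreover have "a^2 \<le> (K / c) * exp (- l * d) * n^2"
    using h c by (simp add: field_simps)
  ultimately show "a^2 \<le> (sqrt (K / c) * exp (- (l / 2) * d) * n)^2" by simp
  show "0 \<le> sqrt (K / c) * exp (- (l / 2) * d) * n" using c K n by simp
qed

theorem theorem1:
  fixes N :: nat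
    and E A P :: "nat \<Rightarrow> real^'n^'n"
    and Sys :: "(real \<times> (real \<Rightarrow> nat) \<times> (real \<Rightarrow> real^'n)) set"
  assumes nonsing: "\<forall>i \<in> {1..N}. invertible (A i)"
    and lyap: "\<forall>i \<in> {1..N}. lyapunov_matrix (E i) (A i) (P i)"
    and sols: "\<forall>(t0, \<sigma>, x) \<in> Sys. switched_solution N E A t0 \<sigma> x"
    and jump: "\<forall>(t0, \<sigma>, x) \<in> Sys. \<forall>ts \<in> switch_times t0 \<sigma>. \<forall>i j xm xp.
                 t0 < ts \<and>
                 (\<forall>\<^sub>F t in at_left ts. \<sigma> t = i) \<and> (\<forall>\<^sub>F t in at_right ts. \<sigma> t = j) \<and>
                 (x \<longlongrightarrow> xm) (at_left ts) \<and> (x \<longlongrightarrow> xp) (at_right ts) \<longrightarrow>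
                 xp \<bullet> (P j *v xp) \<le> xm \<bullet> (P i *v xm)"
  shows "GUES Sys"
proof (cases "N = 0")
  case True
  have "Sys = {}"
  proof (rule ccontr)
    assume "Sys \<noteq> {}"
    then obtain t0 \<sigma> x where "(t0, \<sigma>, x) \<in> Sys" by auto
    then have "switched_solution N E A t0 \<sigma> x" using sols by blast
    then have "\<sigma> t0 \<in> {1..N}" unfolding switched_solution_def by blast
    then show False using True by simp
  qed
  then show ?thesis unfolding GUES_def by (intro exI[of _ "1::real"] conjI) auto
next
  case False
  let ?I = "{1..N}"
  have fin: "finite ?I" and ne: "?I \<noteq> {}" using False by auto
  have "\<forall>i\<in>?I. \<exists>cl. fst cl > 0 \<and> snd cl > 0 \<and>
     (\<forall>y\<in>consistency_space (E i) (A i). fst cl * (norm y)^2 \<le> y \<bullet> (P i *v y)) \<and>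
     (\<forall>v\<in>consistency_space (E i) (A i). 2 * (AinvE (E i) (A i) v \<bullet> (P i *v v)) \<le> - snd cl * (AinvE (E i) (A i) v \<bullet> (P i *v AinvE (E i) (A i) v)))"
  proof
    fix i assume "i \<in> ?I"
    then obtain c l where "c > 0" "l > 0"
      "\<forall>y\<in>consistency_space (E i) (A i). c * (norm y)^2 \<le> y \<bullet> (P i *v y)"
      "\<forall>v\<in>consistency_space (E i) (A i). 2 * (AinvE (E i) (A i) v \<bullet> (P i *v v)) \<le> - l * (AinvE (E i) (A i) v \<bullet> (P i *v AinvE (E i) (A i) v))"
      using mode_consts lyap by blast
    then show "\<exists>cl. fst cl > 0 \<and> snd cl > 0 \<and>
     (\<forall>y\<in>consistency_space (E i) (A i). fst cl * (norm y)^2 \<le> y \<bullet> (P i *v y)) \<and>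
     (\<forall>v\<in>consistency_space (E i) (A i). 2 * (AinvE (E i) (A i) v \<bullet> (P i *v v)) \<le> - snd cl * (AinvE (E i) (A i) v \<bullet> (P i *v AinvE (E i) (A i) v)))"
      by (intro exI[of _ "(c, l)"]) simp
  qed
  then obtain cl where cl: "\<forall>i\<in>?I. fst (cl i) > 0 \<and> snd (cl i) > 0 \<and>
     (\<forall>y\<in>consistency_space (E i) (A i). fst (cl i) * (norm y)^2 \<le> y \<bullet> (P i *v y)) \<and>
     (\<forall>v\<in>consistency_space (E i) (A i). 2 * (AinvE (E i) (A i) v \<bullet> (P i *v v)) \<le> - snd (cl i) * (AinvE (E i) (A i) v \<bullet> (P i *v AinvE (E i) (A i) v)))"
    by (rule bchoice[elim_format]) blast
  have "\<forall>i\<in>?I. \<exists>K. K > 0 \<and> (\<forall>y. y \<bullet> (P i *v y) \<le> K * (norm y)^2)"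
    using quad_upper by blast
  then obtain Kf where Kf: "\<forall>i\<in>?I. Kf i > 0 \<and> (\<forall>y. y \<bullet> (P i *v y) \<le> Kf i * (norm y)^2)"
    by (rule bchoice[elim_format]) blast
  define c where "c = Min ((\<lambda>i. fst (cl i)) ` ?I)"
  define l where "l = Min ((\<lambda>i. snd (cl i)) ` ?I)"
  define K where "K = Max (Kf ` ?I)"
  have cpos: "c > 0" unfolding c_def using fin ne cl by (subst Min_gr_iff) auto
  have lpos: "l > 0" unfolding l_def using fin ne cl by (subst Min_gr_iff) auto
  have Kpos: "K > 0" unfolding K_def using fin ne Kf by (subst Max_gr_iff) auto
  have cle: "c \<le> fst (cl i)" if "i \<in> ?I" for i unfolding c_def using fin that by simp
  have lle: "l \<le> snd (cl i)" if "i \<in> ?I" for i unfolding l_def using fin that by simp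
  have Kge: "Kf i \<le> K" if "i \<in> ?I" for i unfolding K_def using fin that by simp
  have Psym: "\<forall>i\<in>?I. transpose (P i) = P i" using lyap unfolding lyapunov_matrix_def by blast
  have hc: "\<forall>i\<in>?I. \<forall>y\<in>consistency_space (E i) (A i). c * (norm y)^2 \<le> y \<bullet> (P i *v y)"
  proof (intro ballI)
    fix i y assume i: "i \<in> ?I" and y: "y \<in> consistency_space (E i) (A i)"
    have "c * (norm y)^2 \<le> fst (cl i) * (norm y)^2" using cle[OF i] by (simp add: mult_right_mono)
    also have "\<dots> \<le> y \<bullet> (P i *v y)" using cl i y by blast
    finally show "c * (norm y)^2 \<le> y \<bullet> (P i *v y)" .
  qed
  have hK: "\<forall>i\<in>?I. \<forall>y. y \<bullet> (P i *v y) \<le> K * (norm y)^2"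
  proof (intro ballI allI)
    fix i y assume i: "i \<in> ?I"
    have "y \<bullet> (P i *v y) \<le> Kf i * (norm y)^2" using Kf i by blast
    also have "\<dots> \<le> K * (norm y)^2" using Kge[OF i] by (simp add: mult_right_mono)
    finally show "y \<bullet> (P i *v y) \<le> K * (norm y)^2" .
  qed
  have hl: "\<forall>i\<in>?I. \<forall>v\<in>consistency_space (E i) (A i).
          2 * (AinvE (E i) (A i) v \<bullet> (P i *v v)) \<le> - l * (AinvE (E i) (A i) v \<bullet> (P i *v AinvE (E i) (A i) v))"
  proof (intro ballI)
    fix i v assume i: "i \<in> ?I" and v: "v \<in> consistency_space (E i) (A i)"
    let ?w = "AinvE (E i) (A i) v"
    have wC: "?w \<in> consistency_space (E i) (A i)" using image_C v by blast
    have "0 \<le> c * (norm ?w)^2" using cpos by simp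
    also have "\<dots> \<le> ?w \<bullet> (P i *v ?w)" using hc i wC by blast
    finally have V0: "0 \<le> ?w \<bullet> (P i *v ?w)" .
    have "2 * (?w \<bullet> (P i *v v)) \<le> - snd (cl i) * (?w \<bullet> (P i *v ?w))" using cl i v by blast
    also have "\<dots> \<le> - l * (?w \<bullet> (P i *v ?w))" using lle[OF i] V0 by (simp add: mult_right_mono)
    finally show "2 * (?w \<bullet> (P i *v v)) \<le> - l * (?w \<bullet> (P i *v ?w))" .
  qed
  have "\<forall>(t0, \<sigma>, x) \<in> Sys. \<forall>t \<ge> t0.
      norm (x t) \<le> sqrt (K / c) * exp (- (l / 2) * (t - t0)) * norm (x t0)"
  proof (clarify)
    fix t0 \<sigma> x t assume mem: "(t0, \<sigma>, x) \<in> Sys" and t: "t0 \<le> t"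
    have sol: "switched_solution N E A t0 \<sigma> x" using sols mem by blast
    have jmp: "\<forall>ts \<in> switch_times t0 \<sigma>. \<forall>i j xm xp.
                 t0 < ts \<and>
                 (\<forall>\<^sub>F t in at_left ts. \<sigma> t = i) \<and> (\<forall>\<^sub>F t in at_right ts. \<sigma> t = j) \<and>
                 (x \<longlongrightarrow> xm) (at_left ts) \<and> (x \<longlongrightarrow> xp) (at_right ts) \<longrightarrow>
                 xp \<bullet> (P j *v xp) \<le> xm \<bullet> (P i *v xm)" using jump mem by blast
    have "c * (norm (x t))^2 \<le> exp (- l * (t - t0)) * (K * (norm (x t0))^2)"
      by (rule decay[OF sol nonsing Psym hl hc hK jmp t])
    then show "norm (x t) \<le> sqrt (K / c) * exp (- (l / 2) * (t - t0)) * norm (x t0)"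
      by (rule sqrt_bound[OF cpos Kpos]) auto
  qed
  moreover have "sqrt (K / c) > 0" "l / 2 > 0" using cpos Kpos lpos by auto
  ultimately show ?thesis unfolding GUES_def by blast
qed


end
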